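(* Let $(S,K,I)$ be a split graph. If the factor graph $\Phi(S)$ is connected, then its diameter is at most $\lceil(\deg(S)+1)/2\rceil$.
   Context: A split graph $(S,K,I)$ is a graph $S$ together with a fixed partition $V(S)=K\dot\cup I$, where $K$ is a clique and $I$ is an independent set. For a vertex $v$ of $S$, $N_v$ denotes its open neighborhood in $S$ and $d_v=|N_v|$; $\eta_{uv}=|N_u\cap N_v|$. A 2-switch in $S$ replaces edges $ab,cd$ with $ac,bd$ when $ab,cd\in E(S)$ and $ac,bd\notin E(S)$. The factor graph $\Phi(S)$ is the loopless multigraph with vertex set $I$ in which, for distinct $u,v\in I$, there is one edge joining $u$ and $v$ for each 2-switch of $S$ acting on $u$ and $v$; equivalently, the multiplicity of $uv$ is $\sigma_{uv}=(d_u-\eta_{uv})(d_v-\eta_{uv})$. The 2-switch-degree $\deg(S)$ is the number of 2-switches acting on $S$, which equals the number of edges of $\Phi(S)$ counted with multiplicity, i.e. $\sum_{\{u,v\}\subseteq I}\sigma_{uv}$. Distances (and hence the diameter) in $\Phi(S)$ are measured ignoring edge multiplicities, i.e. as in the underlying simple graph. *)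

theory Defs
  imports Complex_Main
begin

definition split_graph :: "'a set \<Rightarrow> ('a \<Rightarrow> 'a \<Rightarrow> bool) \<Rightarrow> 'a set \<Rightarrow> 'a set \<Rightarrow> bool" where
  "split_graph V E K I \<longleftrightarrow>
     finite V \<and>
     (\<forall>u v. E u v \<longrightarrow> u \<in> V \<and> v \<in> V) \<and>
     (\<forall>u v. E u v \<longrightarrow> E v u) \<and>
     (\<forall>v. \<not> E v v) \<and>
     K \<union> I = V \<and> K \<inter> I = {} \<and>
     (\<forall>u\<in>K. \<forall>v\<in>K. u \<noteq> v \<longrightarrow> E u v) \<and>
     (\<forall>u\<in>I. \<forall>v\<in>I. \<not> E u v)"

definition nbhd :: "'a set \<Rightarrow> ('a \<Rightarrow> 'a \<Rightarrow> bool) \<Rightarrow> 'a \<Rightarrow> 'a set" where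
  "nbhd V E v = {w \<in> V. E v w}"

definition vdeg :: "'a set \<Rightarrow> ('a \<Rightarrow> 'a \<Rightarrow> bool) \<Rightarrow> 'a \<Rightarrow> nat" where
  "vdeg V E v = card (nbhd V E v)"

definition eta :: "'a set \<Rightarrow> ('a \<Rightarrow> 'a \<Rightarrow> bool) \<Rightarrow> 'a \<Rightarrow> 'a \<Rightarrow> nat" where
  "eta V E u v = card (nbhd V E u \<inter> nbhd V E v)"

text \<open>Multiplicity of the edge uv in the factor graph: sigma_uv = (d_u - eta_uv)(d_v - eta_uv).\<close>
definition sigma :: "'a set \<Rightarrow> ('a \<Rightarrow> 'a \<Rightarrow> bool) \<Rightarrow> 'a \<Rightarrow> 'a \<Rightarrow> nat" where
  "sigma V E u v = (vdeg V E u - eta V E u v) * (vdeg V E v - eta V E u v)"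

text \<open>2-switch-degree: sum of sigma over unordered pairs {u,v} of distinct vertices of I.
Since sigma is symmetric in u,v, this is half the sum over ordered pairs.\<close>
definition switch_deg :: "'a set \<Rightarrow> ('a \<Rightarrow> 'a \<Rightarrow> bool) \<Rightarrow> 'a set \<Rightarrow> nat" where
  "switch_deg V E I = (\<Sum>u\<in>I. \<Sum>v\<in>I. if u \<noteq> v then sigma V E u v else 0) div 2"

text \<open>Adjacency in the underlying simple graph of the factor graph Phi(S), on vertex set I.\<close>
definition factor_adj :: "'a set \<Rightarrow> ('a \<Rightarrow> 'a \<Rightarrow> bool) \<Rightarrow> 'a set \<Rightarrow> ('a \<times> 'a) set" where
  "factor_adj V E I = {(u, v). u \<in> I \<and> v \<in> I \<and> u \<noteq> v \<and> sigma V E u v > 0}"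

definition factor_connected :: "'a set \<Rightarrow> ('a \<Rightarrow> 'a \<Rightarrow> bool) \<Rightarrow> 'a set \<Rightarrow> bool" where
  "factor_connected V E I \<longleftrightarrow> (\<forall>u\<in>I. \<forall>v\<in>I. (u, v) \<in> (factor_adj V E I)\<^sup>*)"

definition factor_dist :: "'a set \<Rightarrow> ('a \<Rightarrow> 'a \<Rightarrow> bool) \<Rightarrow> 'a set \<Rightarrow> 'a \<Rightarrow> 'a \<Rightarrow> nat" where
  "factor_dist V E I u v = (LEAST n. (u, v) \<in> (factor_adj V E I) ^^ n)"

definition factor_diam :: "'a set \<Rightarrow> ('a \<Rightarrow> 'a \<Rightarrow> bool) \<Rightarrow> 'a set \<Rightarrow> nat" where
  "factor_diam V E I = Max (insert 0 {factor_dist V E I u v | u v. u \<in> I \<and> v \<in> I})"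

end

theory Submission
  imports Defs
begin

lemma sigma_alt:
  assumes "finite V"
  shows "sigma V E u v = card (nbhd V E u - nbhd V E v) * card (nbhd V E v - nbhd V E u)"
proof -
  have f: "finite (nbhd V E x)" for x using assms unfolding nbhd_def by auto
  have "card (nbhd V E u - nbhd V E v) = card (nbhd V E u) - card (nbhd V E u \<inter> nbhd V E v)"
    using f by (simp add: card_Diff_subset_Int)
  moreover have "card (nbhd V E v - nbhd V E u) = card (nbhd V E v) - card (nbhd V E u \<inter> nbhd V E v)"
    using f by (simp add: card_Diff_subset_Int Int_commute)
  ultimately show ?thesis unfolding sigma_def vdeg_def eta_def by simp
qed

lemma sigma_sym:
  "sigma V E u v = sigma V E v u"
  unfolding sigma_def eta_def by (simp add: Int_commute)

lemma sigma_pos_iff: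
  assumes "finite V"
  shows "sigma V E u v > 0 \<longleftrightarrow> \<not> nbhd V E u \<subseteq> nbhd V E v \<and> \<not> nbhd V E v \<subseteq> nbhd V E u"
proof -
  have f: "finite (nbhd V E x - nbhd V E y)" for x y using assms unfolding nbhd_def by auto
  show ?thesis unfolding sigma_alt[OF assms]
    using f[of u v] f[of v u] by (auto simp: card_gt_0_iff)
qed

lemma walk_sub:
  assumes "\<forall>k<n. (p k, p (Suc k)) \<in> R" "i \<le> j" "j \<le> n"
  shows "(p i, p j) \<in> R ^^ (j - i)"
proof -
  have "\<exists>f. f 0 = p i \<and> f (j - i) = p j \<and> (\<forall>k<j - i. (f k, f (Suc k)) \<in> R)"
    by (rule exI[of _ "\<lambda>k. p (k + i)"]) (use assms in auto)
  then show ?thesis by (simp add: relpow_fun_conv)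
qed

lemma set_lemma:
  assumes "B - C = {a}" "C - B = {b}"
    "A \<subseteq> C \<or> C \<subseteq> A" "B \<subseteq> D \<or> D \<subseteq> B" "A \<subseteq> D \<or> D \<subseteq> A"
    "\<not> (A \<subseteq> B \<or> B \<subseteq> A)" "\<not> (C \<subseteq> D \<or> D \<subseteq> C)"
  shows False
proof -
  have a1: "a \<in> B" "a \<notin> C" "\<And>x. x \<in> B \<Longrightarrow> x \<notin> C \<Longrightarrow> x = a"
    using assms(1) by auto
  have b1: "b \<in> C" "b \<notin> B" "\<And>x. x \<in> C \<Longrightarrow> x \<notin> B \<Longrightarrow> x = b"
    using assms(2) by auto
  have bA: "b \<in> A"
  proof (rule ccontr)
    assume nb: "b \<notin> A"
    from assms(3) show False
    proof
      assume "A \<subseteq> C" then have "A \<subseteq> B" using b1 nb by blast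
      then show False using assms(6) by blast
    next
      assume "C \<subseteq> A" then show False using b1 nb by blast
    qed
  qed
  have aA: "a \<notin> A"
  proof
    assume a: "a \<in> A"
    from assms(3) show False
    proof
      assume "A \<subseteq> C" then show False using a1 a by blast
    next
      assume "C \<subseteq> A" then have "B \<subseteq> A" using a1 a by blast
      then show False using assms(6) by blast
    qed
  qed
  have aD: "a \<in> D"
  proof (rule ccontr)
    assume na: "a \<notin> D"
    from assms(4) show False
    proof
      assume "B \<subseteq> D" then show False using a1 na by blast
    next
      assume "D \<subseteq> B" then have "D \<subseteq> C" using a1 na by blast
      then show False using assms(7) by blast
    qed
  qed
  have bD: "b \<notin> D"
  proof
    assume b: "b \<in> D"
    from assms(4) show False
    proof
      assume "B \<subseteq> D" then have "C \<subseteq> D" using b1 b by blast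
      then show False using assms(7) by blast
    next
      assume "D \<subseteq> B" then show False using b1 b by blast
    qed
  qed
  from assms(5) show False
  proof
    assume "A \<subseteq> D" then show False using bA bD by blast
  next
    assume "D \<subseteq> A" then show False using aA aD by blast
  qed
qed

lemma dist_bound:
  assumes sg: "split_graph V E K I" and u: "u \<in> I" and v: "v \<in> I"
    and ex: "(u, v) \<in> factor_adj V E I ^^ m"
  shows "2 * factor_dist V E I u v \<le> switch_deg V E I + 2"
proof -
  let ?R = "factor_adj V E I"
  let ?N = "nbhd V E"
  define D where "D = factor_dist V E I u v"
  have finV: "finite V" and IV: "I \<subseteq> V" using sg unfolding split_graph_def by auto
  have finI: "finite I" using finV IV finite_subset by blast
  have DR: "(u, v) \<in> ?R ^^ D" unfolding D_def factor_dist_def by (rule LeastI[of _ m]) (rule ex)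
  have least: "D \<le> n" if "(u, v) \<in> ?R ^^ n" for n
    unfolding D_def factor_dist_def by (rule Least_le) (rule that)
  obtain p where p0: "p 0 = u" and pD: "p D = v" and step: "\<forall>i<D. (p i, p (Suc i)) \<in> ?R"
    using DR by (auto simp: relpow_fun_conv)
  show ?thesis
  proof (cases "D \<le> 1")
    case True
    then show ?thesis unfolding D_def[symmetric] by simp
  next
    case False
    then have D2: "2 \<le> D" by simp
    have pI: "p i \<in> I" if "i \<le> D" for i
    proof (cases "i = D")
      case True then show ?thesis using pD v by simp
    next
      case False then have "i < D" using that by simp
      then show ?thesis using step unfolding factor_adj_def by auto
    qed
    have distinct: "p i \<noteq> p j" if "i < j" "j \<le> D" for i j
    proof
      assume eq: "p i = p j"
      have "(p 0, p i) \<in> ?R ^^ (i - 0)" using walk_sub[OF step, of 0 i] that by simp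
      then have a: "(u, p i) \<in> ?R ^^ i" using p0 by simp
      have "(p j, p D) \<in> ?R ^^ (D - j)" using walk_sub[OF step, of j D] that by simp
      then have b: "(p i, v) \<in> ?R ^^ (D - j)" using pD eq by simp
      have "(u, v) \<in> ?R ^^ (i + (D - j))" unfolding relpow_add using a b by blast
      then have "D \<le> i + (D - j)" by (rule least)
      then show False using that by simp
    qed
    have inj: "i = j" if "i \<le> D" "j \<le> D" "p i = p j" for i j
      using distinct[of i j] distinct[of j i] that by (cases i j rule: linorder_cases) auto
    have nonadj: "(p i, p j) \<notin> ?R" if "i + 2 \<le> j" "j \<le> D" for i j
    proof
      assume e: "(p i, p j) \<in> ?R"
      have "(p 0, p i) \<in> ?R ^^ (i - 0)" using walk_sub[OF step, of 0 i] that by simp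
      then have a: "(u, p i) \<in> ?R ^^ i" using p0 by simp
      have "(p j, p D) \<in> ?R ^^ (D - j)" using walk_sub[OF step, of j D] that by simp
      then have "(p j, v) \<in> ?R ^^ (D - j)" using pD by simp
      then have b: "(p i, v) \<in> ?R ^^ Suc (D - j)" using e by (rule relpow_Suc_I2[rotated])
      have "(u, v) \<in> ?R ^^ (i + Suc (D - j))" unfolding relpow_add using a b by blast
      then have "D \<le> i + Suc (D - j)" by (rule least)
      then show False using that by simp
    qed
    have comp: "?N (p i) \<subseteq> ?N (p j) \<or> ?N (p j) \<subseteq> ?N (p i)" if "i + 2 \<le> j" "j \<le> D" for i j
    proof -
      have "p i \<in> I" "p j \<in> I" using pI that by auto
      moreover have "p i \<noteq> p j" using distinct that by simp
      moreover have "\<not> (p i \<in> I \<and> p j \<in> I \<and> p i \<noteq> p j \<and> sigma V E (p i) (p j) > 0)"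
        using nonadj[OF that] unfolding factor_adj_def by simp
      ultimately have "\<not> sigma V E (p i) (p j) > 0" by simp
      then show ?thesis by (simp add: sigma_pos_iff[OF finV])
    qed
    have adjinc: "\<not> (?N (p i) \<subseteq> ?N (p (Suc i)) \<or> ?N (p (Suc i)) \<subseteq> ?N (p i))" if "i < D" for i
    proof -
      have "(p i, p (Suc i)) \<in> ?R" using step that by simp
      then have "sigma V E (p i) (p (Suc i)) > 0" unfolding factor_adj_def by simp
      then show ?thesis by (simp add: sigma_pos_iff[OF finV])
    qed
    define s where "s i = sigma V E (p i) (p (Suc i))" for i
    have s1: "1 \<le> s i" if "i < D" for i
    proof -
      have "(p i, p (Suc i)) \<in> ?R" using step that by simp
      then show ?thesis unfolding factor_adj_def s_def by simp
    qed
    have s2: "2 \<le> s i" if "0 < i" "i + 2 \<le> D" for i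
    proof (rule ccontr)
      assume "\<not> 2 \<le> s i"
      then have "s i = 1" using s1[of i] that by simp
      then have "card (?N (p i) - ?N (p (Suc i))) * card (?N (p (Suc i)) - ?N (p i)) = 1"
        unfolding s_def sigma_alt[OF finV] .
      then have c1: "card (?N (p i) - ?N (p (Suc i))) = 1" and c2: "card (?N (p (Suc i)) - ?N (p i)) = 1"
        by simp_all
      obtain a where a: "?N (p i) - ?N (p (Suc i)) = {a}" using c1 by (rule card_1_singletonE)
      obtain b where b: "?N (p (Suc i)) - ?N (p i) = {b}" using c2 by (rule card_1_singletonE)
      have i1: "Suc (i - 1) = i" using that by simp
      show False
      proof (rule set_lemma[OF a b])
        show "?N (p (i - 1)) \<subseteq> ?N (p (Suc i)) \<or> ?N (p (Suc i)) \<subseteq> ?N (p (i - 1))"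
          using comp[of "i - 1" "Suc i"] that by simp
        show "?N (p i) \<subseteq> ?N (p (i + 2)) \<or> ?N (p (i + 2)) \<subseteq> ?N (p i)"
          using comp[of i "i + 2"] that by simp
        show "?N (p (i - 1)) \<subseteq> ?N (p (i + 2)) \<or> ?N (p (i + 2)) \<subseteq> ?N (p (i - 1))"
          using comp[of "i - 1" "i + 2"] that by simp
        show "\<not> (?N (p (i - 1)) \<subseteq> ?N (p i) \<or> ?N (p i) \<subseteq> ?N (p (i - 1)))"
          using adjinc[of "i - 1"] that i1 by simp
        show "\<not> (?N (p (Suc i)) \<subseteq> ?N (p (i + 2)) \<or> ?N (p (i + 2)) \<subseteq> ?N (p (Suc i)))"
          using adjinc[of "Suc i"] that by simp
      qed
    qed
    have sumS: "2 * D \<le> (\<Sum>i<D. s i) + 2"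
    proof -
      have "(\<Sum>i<D. (2::nat)) \<le> (\<Sum>i<D. s i + (if i = 0 then 1 else 0) + (if i = D - 1 then 1 else 0))"
      proof (rule sum_mono)
        fix i assume "i \<in> {..<D}"
        then have "i < D" by simp
        then show "2 \<le> s i + (if i = 0 then 1 else 0) + (if i = D - 1 then 1 else 0)"
          using s1[of i] s2[of i] D2 by (cases "i = 0"; cases "i = D - 1") auto
      qed
      also have "\<dots> = (\<Sum>i<D. s i) + 2"
        using D2 by (simp add: sum.distrib)
      finally show ?thesis by simp
    qed
    define f where "f = (\<lambda>(x, y). if x \<noteq> y then sigma V E x y else 0)"
    define P1 where "P1 = (\<lambda>i. (p i, p (Suc i))) ` {..<D}"
    define P2 where "P2 = (\<lambda>i. (p (Suc i), p i)) ` {..<D}"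
    have T: "(\<Sum>x\<in>I. \<Sum>y\<in>I. if x \<noteq> y then sigma V E x y else 0) = sum f (I \<times> I)"
      unfolding f_def by (simp add: sum.cartesian_product)
    have sub: "P1 \<union> P2 \<subseteq> I \<times> I" unfolding P1_def P2_def using pI by auto
    have disj: "P1 \<inter> P2 = {}"
    proof -
      { fix i j assume "i < D" "j < D" "p i = p (Suc j)" "p (Suc i) = p j"
        then have "i = Suc j" "Suc i = j" using inj by auto
        then have False by simp }
      then show ?thesis unfolding P1_def P2_def by auto
    qed
    have injon1: "inj_on (\<lambda>i. (p i, p (Suc i))) {..<D}"
      by (rule inj_onI) (use inj in auto)
    have injon2: "inj_on (\<lambda>i. (p (Suc i), p i)) {..<D}"
      by (rule inj_onI) (use inj in auto)
    have ne: "p i \<noteq> p (Suc i)" if "i < D" for i using distinct[of i "Suc i"] that by simp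
    have S1: "sum f P1 = (\<Sum>i<D. s i)"
      unfolding P1_def using injon1 ne by (simp add: sum.reindex f_def s_def)
    have S2: "sum f P2 = (\<Sum>i<D. s i)"
    proof -
      have "sum f P2 = (\<Sum>i<D. f (p (Suc i), p i))"
        unfolding P2_def by (simp add: sum.reindex[OF injon2])
      also have "\<dots> = (\<Sum>i<D. s i)"
      proof (rule sum.cong)
        fix i assume "i \<in> {..<D}"
        then have "p (Suc i) \<noteq> p i" using ne[of i] by auto
        then have "f (p (Suc i), p i) = sigma V E (p (Suc i)) (p i)" by (simp add: f_def)
        also have "\<dots> = s i" unfolding s_def by (rule sigma_sym)
        finally show "f (p (Suc i), p i) = s i" .
      qed simp
      finally show ?thesis .
    qed
    have finP: "finite P1" "finite P2" unfolding P1_def P2_def by auto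
    have eq: "sum f (P1 \<union> P2) = 2 * (\<Sum>i<D. s i)"
      using sum.union_disjoint[OF finP disj, of f] S1 S2 by simp
    have le: "sum f (P1 \<union> P2) \<le> sum f (I \<times> I)"
      by (rule sum_mono2) (use finI sub in auto)
    from eq le have "2 * (\<Sum>i<D. s i) \<le> (\<Sum>x\<in>I. \<Sum>y\<in>I. if x \<noteq> y then sigma V E x y else 0)"
      using T by simp
    then have "(\<Sum>i<D. s i) \<le> switch_deg V E I" unfolding switch_deg_def by simp
    then show ?thesis using sumS unfolding D_def[symmetric] by simp
  qed
qed

theorem theorem4p7:
  fixes V K I :: "'a set" and E :: "'a \<Rightarrow> 'a \<Rightarrow> bool"
  assumes "split_graph V E K I"
    and "factor_connected V E I"
  shows "real (factor_diam V E I) \<le> real_of_int \<lceil>(real (switch_deg V E I) + 1) / 2\<rceil>"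
proof -
  let ?c = "\<lceil>(real (switch_deg V E I) + 1) / 2\<rceil>"
  let ?S = "{factor_dist V E I u v | u v. u \<in> I \<and> v \<in> I}"
  have finV: "finite V" and IV: "I \<subseteq> V" using assms(1) unfolding split_graph_def by auto
  have finI: "finite I" using finV IV finite_subset by blast
  have c0: "0 \<le> ?c" by simp
  have bd: "real x \<le> real_of_int ?c" if "x \<in> insert 0 ?S" for x
  proof (cases "x = 0")
    case True then show ?thesis using c0 by simp
  next
    case False
    then have "x \<in> ?S" using that by simp
    then obtain u v where uv: "u \<in> I" "v \<in> I" and x: "x = factor_dist V E I u v" by blast
    have "(u, v) \<in> (factor_adj V E I)\<^sup>*" using assms(2) uv unfolding factor_connected_def by auto
    then obtain m where "(u, v) \<in> factor_adj V E I ^^ m" by (auto simp: rtrancl_power)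
    from dist_bound[OF assms(1) uv this] x have "2 * x \<le> switch_deg V E I + 2" by simp
    then have "real (2 * x) \<le> real (switch_deg V E I + 2)" by (simp only: of_nat_le_iff)
    then have "2 * real x \<le> real (switch_deg V E I) + 2" by simp
    then have "real x - 1 < (real (switch_deg V E I) + 1) / 2" by (simp add: field_simps)
    also have "\<dots> \<le> real_of_int ?c" by (rule le_of_int_ceiling)
    finally have "of_int (int x - 1) < (of_int ?c :: real)" by simp
    then have "int x - 1 < ?c" by (simp only: of_int_less_iff)
    then have "int x \<le> ?c" by simp
    then show ?thesis by (metis of_int_le_iff of_int_of_nat_eq)
  qed
  have fin: "finite (insert 0 ?S)"
  proof -
    have "?S \<subseteq> (\<lambda>(u, v). factor_dist V E I u v) ` (I \<times> I)" by auto
    then show ?thesis using finI finite_subset by blast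
  qed
  have "factor_diam V E I \<in> insert 0 ?S" unfolding factor_diam_def by (rule Max_in[OF fin]) simp
  then show ?thesis by (rule bd)
qed

end
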